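(* Let $T\in\mathbb R$ and let $f\ge0$, $g>0$, $h>0$ be continuous functions on $(T,\infty)$ with $h$ differentiable, and set $y(t)=h(t)\int_T^te^{-\int_\tau^tg(\theta)d\theta}f(\tau)d\tau$ for $t>T$. Assume $\int_T^\infty g(t)dt=\infty$ and $\lim_{t\to\infty}\frac{h'(t)}{h(t)g(t)}=0$. Then $$\limsup_{t\to\infty}y(t)\le\limsup_{t\to\infty}\frac{h(t)f(t)}{g(t)}.$$ *)

theory Defs
  imports "HOL-Analysis.Analysis"
begin

end

theory Submission
  imports Defs
begin

lemma G_deriv:
  fixes g :: "real \<Rightarrow> real"
  assumes g_cont: "continuous_on {T<..} g" and a: "a > T" and s: "s > a"
  shows "((\<lambda>x. integral {a..x} g) has_real_derivative g s) (at s)"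
proof -
  have c: "continuous_on {a..s+1} g"
    by (rule continuous_on_subset[OF g_cont]) (use a in auto)
  have D: "((\<lambda>x. integral {a..x} g) has_real_derivative g s) (at s within {a..s+1})"
    by (rule integral_has_real_derivative[OF c]) (use s in auto)
  have i: "s \<in> interior {a..s+1}" using s by simp
  show ?thesis using D unfolding at_within_interior[OF i] .
qed

lemma int_combine:
  fixes g :: "real \<Rightarrow> real"
  assumes g_cont: "continuous_on {T<..} g" and "T < u" "u \<le> v" "v \<le> w"
  shows "integral {u..w} g = integral {u..v} g + integral {v..w} g"
proof -
  have "continuous_on {u..w} g"
    by (rule continuous_on_subset[OF g_cont]) (use assms in auto)
  then have "g integrable_on {u..w}" by (rule integrable_continuous_real)
  then show ?thesis using Henstock_Kurzweil_Integration.integral_combine assms by metis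
qed

lemma set_int_nonneg:
  fixes f :: "real \<Rightarrow> real"
  assumes "\<And>x. x \<in> A \<Longrightarrow> 0 \<le> f x"
  shows "0 \<le> (LINT x:A|M. f x)"
  unfolding set_lebesgue_integral_def
  by (rule Bochner_Integration.integral_nonneg) (auto simp: indicator_def assms)


lemma key:
  fixes T :: real and f g h :: "real \<Rightarrow> real"
  assumes f_nonneg: "\<And>t. t > T \<Longrightarrow> f t \<ge> 0"
    and g_cont: "continuous_on {T<..} g" and g_pos: "\<And>t. t > T \<Longrightarrow> g t > 0"
    and h_pos: "\<And>t. t > T \<Longrightarrow> h t > 0"
    and h_diff: "\<And>t. t > T \<Longrightarrow> h differentiable (at t)"
    and y_integrable: "\<And>t. t > T \<Longrightarrow>
        set_integrable lborel {T<..<t} (\<lambda>\<tau>. exp (- integral {\<tau>..t} g) * f \<tau>)"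
    and g_div: "\<And>s. s > T \<Longrightarrow> filterlim (\<lambda>t. integral {s..t} g) at_top at_top"
    and eps: "0 < \<epsilon>" "\<epsilon> < 1" and c: "0 \<le> c" and t0: "T + 1 < t0"
    and hb: "\<And>t. t \<ge> t0 \<Longrightarrow> h t * f t / g t \<le> c"
    and db: "\<And>t. t \<ge> t0 \<Longrightarrow> deriv h t / (h t * g t) \<le> \<epsilon>"
  shows "Limsup at_top (\<lambda>t. ereal (h t * (LBINT \<tau>:{T<..<t}. exp (- integral {\<tau>..t} g) * f \<tau>)))
         \<le> ereal (c / (1 - \<epsilon>))"
proof -
  define G where "G x = integral {T+1..x} g" for x
  have Gd: "(G has_real_derivative g s) (at s)" if "s > T+1" for s
    unfolding G_def by (rule G_deriv[OF g_cont]) (use that in auto)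
  have Gsplit: "integral {\<tau>..t} g = G t - G \<tau>" if "T+1 \<le> \<tau>" "\<tau> \<le> t" for \<tau> t
    using int_combine[OF g_cont, of "T+1" \<tau> t] that unfolding G_def by auto
  have hmono: "h t \<le> h \<tau> * exp (\<epsilon> * (G t - G \<tau>))" if \<tau>: "t0 \<le> \<tau>" "\<tau> \<le> t" for \<tau> t
  proof -
    define \<phi> where "\<phi> x = ln (h x) - \<epsilon> * G x" for x
    have "\<phi> t \<le> \<phi> \<tau>"
    proof (rule DERIV_nonpos_imp_nonincreasing[OF \<tau>(2)])
      fix x assume x: "\<tau> \<le> x" "x \<le> t"
      then have xT: "x > T+1" "x \<ge> t0" using \<tau> t0 by auto
      have hp: "h x > 0" "g x > 0" using h_pos g_pos xT by auto
      have hd: "(h has_real_derivative deriv h x) (at x)"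
        using h_diff[of x] xT DERIV_deriv_iff_real_differentiable by auto
      have "(\<phi> has_real_derivative (deriv h x / h x - \<epsilon> * g x)) (at x)"
        unfolding \<phi>_def using hd Gd[OF xT(1)] hp
        by (auto intro!: derivative_eq_intros simp: field_simps)
      moreover have "deriv h x / h x - \<epsilon> * g x \<le> 0"
      proof -
        have "deriv h x / h x = (deriv h x / (h x * g x)) * g x" using hp by (simp add: field_simps)
        also have "\<dots> \<le> \<epsilon> * g x" using db[OF xT(2)] hp by (intro mult_right_mono) auto
        finally show ?thesis by simp
      qed
      ultimately show "\<exists>y. (\<phi> has_real_derivative y) (at x) \<and> y \<le> 0" by blast
    qed
    then have "ln (h t) \<le> ln (h \<tau>) + \<epsilon> * (G t - G \<tau>)" unfolding \<phi>_def by (simp add: algebra_simps)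
    then have "exp (ln (h t)) \<le> exp (ln (h \<tau>) + \<epsilon> * (G t - G \<tau>))" by simp
    then show ?thesis using h_pos[of t] h_pos[of \<tau>] \<tau> t0 by (simp add: exp_add)
  qed
  define C where "C = (LBINT \<tau>:{T<..t0}. exp (- integral {\<tau>..t0} g) * f \<tau>)"
  define a where "a t = h t0 * C * exp (- ((1-\<epsilon>) * (G t - G t0)))" for t
  have Cnn: "0 \<le> C" unfolding C_def
    by (rule set_int_nonneg) (use f_nonneg in auto)
  have bound: "h t * (LBINT \<tau>:{T<..<t}. exp (- integral {\<tau>..t} g) * f \<tau>) \<le> c/(1-\<epsilon>) + a t"
    if t: "t > t0" for t
  proof -
    let ?F = "\<lambda>\<tau>. exp (- integral {\<tau>..t} g) * f \<tau>"
    have int: "set_integrable lborel {T<..<t} ?F" using y_integrable t t0 by auto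
    have intA: "set_integrable lborel {T<..t0} ?F"
      by (rule set_integrable_subset[OF int]) (use t in auto)
    have intB: "set_integrable lborel {t0<..<t} ?F"
      by (rule set_integrable_subset[OF int]) (use t0 in auto)
    have split: "{T<..<t} = {T<..t0} \<union> {t0<..<t}" using t t0 by auto
    have Y: "(LBINT \<tau>:{T<..<t}. ?F \<tau>) = (LBINT \<tau>:{T<..t0}. ?F \<tau>) + (LBINT \<tau>:{t0<..<t}. ?F \<tau>)"
      unfolding split by (rule set_integral_Un[OF _ intA intB]) auto
    have A: "(LBINT \<tau>:{T<..t0}. ?F \<tau>) = exp (- (G t - G t0)) * C"
    proof -
      have "(LBINT \<tau>:{T<..t0}. ?F \<tau>) =
          (LBINT \<tau>:{T<..t0}. exp (- (G t - G t0)) * (exp (- integral {\<tau>..t0} g) * f \<tau>))"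
      proof (rule set_lebesgue_integral_cong)
        show "{T<..t0} \<in> sets lborel" by simp
        show "\<forall>x. x \<in> {T<..t0} \<longrightarrow> ?F x = exp (- (G t - G t0)) * (exp (- integral {x..t0} g) * f x)"
        proof (intro allI impI)
          fix x assume x: "x \<in> {T<..t0}"
          have "integral {x..t} g = integral {x..t0} g + integral {t0..t} g"
            using int_combine[OF g_cont, of x t0 t] x t by auto
          moreover have "integral {t0..t} g = G t - G t0" using Gsplit[of t0 t] t t0 by auto
          ultimately show "?F x = exp (- (G t - G t0)) * (exp (- integral {x..t0} g) * f x)"
            by (simp flip: exp_add add: algebra_simps)
        qed
      qed
      then show ?thesis unfolding C_def by (simp add: set_integral_mult_right)
    qed
    define E where "E \<tau> = exp ((1-\<epsilon>) * G \<tau>) * g \<tau>" for \<tau>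
    have contG: "continuous_on {t0..t} G"
    proof (rule continuous_at_imp_continuous_on, intro ballI)
      fix x assume "x \<in> {t0..t}"
      then have "x > T+1" using t0 by auto
      then show "isCont G x" using Gd DERIV_isCont by blast
    qed
    have contg: "continuous_on {t0..t} g"
      by (rule continuous_on_subset[OF g_cont]) (use t0 in auto)
    have contE: "continuous_on {t0..t} E" unfolding E_def
      using contG contg by (intro continuous_intros) auto
    have intE: "set_integrable lborel {t0<..<t} E"
      by (rule set_integrable_subset[OF borel_integrable_atLeastAtMost'[OF contE]]) auto
    have intE_val: "(LBINT \<tau>:{t0<..<t}. E \<tau>) = (exp ((1-\<epsilon>)*G t) - exp ((1-\<epsilon>)*G t0)) / (1-\<epsilon>)"
    proof -
      have "(E has_integral (exp ((1-\<epsilon>)*G t)/(1-\<epsilon>) - exp ((1-\<epsilon>)*G t0)/(1-\<epsilon>))) {t0..t}"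
      proof (rule fundamental_theorem_of_calculus[where f = "\<lambda>x. exp ((1-\<epsilon>)*G x)/(1-\<epsilon>)"])
        show "t0 \<le> t" using t by simp
        fix x assume x: "x \<in> {t0..t}"
        then have xT: "x > T+1" using t0 by auto
        have "((\<lambda>x. exp ((1-\<epsilon>)*G x)/(1-\<epsilon>)) has_real_derivative E x) (at x)"
          unfolding E_def using Gd[OF xT] eps by (auto intro!: derivative_eq_intros)
        then show "((\<lambda>x. exp ((1-\<epsilon>)*G x)/(1-\<epsilon>)) has_vector_derivative E x) (at x within {t0..t})"
          by (simp add: has_real_derivative_iff_has_vector_derivative[symmetric] has_field_derivative_at_within)
      qed
      then have "integral {t0..t} E = exp ((1-\<epsilon>)*G t)/(1-\<epsilon>) - exp ((1-\<epsilon>)*G t0)/(1-\<epsilon>)"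
        by (rule integral_unique)
      moreover have "(LBINT \<tau>:{t0<..<t}. E \<tau>) = integral {t0<..<t} E"
        by (rule set_borel_integral_eq_integral(2)[OF intE])
      ultimately show ?thesis by (simp add: integral_open_interval_real[symmetric] diff_divide_distrib)
    qed
    define K where "K = c / h t * exp (-((1-\<epsilon>)*G t))"
    have Bb: "(LBINT \<tau>:{t0<..<t}. ?F \<tau>) \<le> (LBINT \<tau>:{t0<..<t}. K * E \<tau>)"
    proof (rule set_integral_mono[OF intB])
      show "set_integrable lborel {t0<..<t} (\<lambda>\<tau>. K * E \<tau>)"
        by (rule set_integrable_mult_right) (rule intE)
      fix \<tau> assume \<tau>: "\<tau> \<in> {t0<..<t}"
      define u where "u = G t - G \<tau>"
      have \<tau>T: "\<tau> > T" "\<tau> \<ge> t0" using \<tau> t0 by auto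
      have hp: "h \<tau> > 0" "g \<tau> > 0" "h t > 0" using h_pos g_pos \<tau>T t t0 by auto
      have iu: "integral {\<tau>..t} g = u" unfolding u_def using Gsplit[of \<tau> t] \<tau> t0 by auto
      have f1: "f \<tau> \<le> c * g \<tau> / h \<tau>"
        using hb[OF \<tau>T(2)] hp by (simp add: pos_divide_le_eq pos_le_divide_eq mult.commute)
      have hm: "h t \<le> h \<tau> * exp (\<epsilon> * u)" unfolding u_def using hmono[of \<tau> t] \<tau> by auto
      have "c * g \<tau> / h \<tau> = (c * g \<tau> * exp (\<epsilon> * u)) / (h \<tau> * exp (\<epsilon> * u))" by simp
      also have "\<dots> \<le> (c * g \<tau> * exp (\<epsilon> * u)) / h t"
        by (rule frac_le) (use c hp hm in auto)
      finally have f2: "f \<tau> \<le> c * g \<tau> * exp (\<epsilon> * u) / h t" using f1 by linarith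
      have "?F \<tau> \<le> exp (-u) * (c * g \<tau> * exp (\<epsilon> * u) / h t)"
        unfolding iu by (rule mult_left_mono[OF f2]) simp
      also have "exp (-u) * exp (\<epsilon> * u) = exp (-((1-\<epsilon>)*G t)) * exp ((1-\<epsilon>) * G \<tau>)"
        unfolding exp_add[symmetric] by (rule arg_cong[where f=exp]) (simp add: u_def algebra_simps)
      then have "exp (-u) * (c * g \<tau> * exp (\<epsilon> * u) / h t) = K * E \<tau>"
        unfolding K_def E_def by (simp add: field_simps)
      finally show "?F \<tau> \<le> K * E \<tau>" .
    qed
    have Bv: "h t * (LBINT \<tau>:{t0<..<t}. K * E \<tau>) \<le> c / (1-\<epsilon>)"
    proof -
      have "h t * (LBINT \<tau>:{t0<..<t}. K * E \<tau>) = c * (exp (-((1-\<epsilon>)*G t)) * (exp ((1-\<epsilon>)*G t) - exp ((1-\<epsilon>)*G t0))) / (1-\<epsilon>)"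
        using h_pos[of t] t t0 unfolding set_integral_mult_right intE_val K_def by simp
      also have "exp (-((1-\<epsilon>)*G t)) * (exp ((1-\<epsilon>)*G t) - exp ((1-\<epsilon>)*G t0)) \<le> 1"
      proof -
        have "exp (-((1-\<epsilon>)*G t)) * exp ((1-\<epsilon>)*G t) = 1" by (simp flip: exp_add)
        moreover have "exp (-((1-\<epsilon>)*G t)) * exp ((1-\<epsilon>)*G t0) \<ge> 0" by simp
        ultimately show ?thesis by (simp add: right_diff_distrib)
      qed
      then have "c * (exp (-((1-\<epsilon>)*G t)) * (exp ((1-\<epsilon>)*G t) - exp ((1-\<epsilon>)*G t0))) / (1-\<epsilon>) \<le> c * 1 / (1-\<epsilon>)"
        using c eps by (intro divide_right_mono mult_left_mono) auto
      finally show ?thesis by simp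
    qed
    have Av: "h t * exp (- (G t - G t0)) * C \<le> a t"
    proof -
      have e: "exp (\<epsilon> * (G t - G t0)) * exp (- (G t - G t0)) = exp (- ((1-\<epsilon>) * (G t - G t0)))"
        unfolding exp_add[symmetric] by (rule arg_cong[where f=exp]) (simp add: algebra_simps)
      have "h t * exp (- (G t - G t0)) * C \<le> h t0 * exp (\<epsilon> * (G t - G t0)) * exp (- (G t - G t0)) * C"
        using hmono[of t0 t] t Cnn by (intro mult_right_mono) auto
      also have "\<dots> = a t" unfolding a_def e[symmetric] by (simp add: mult_ac)
      finally show ?thesis .
    qed
    have "h t * (LBINT \<tau>:{T<..<t}. ?F \<tau>) = h t * exp (- (G t - G t0)) * C + h t * (LBINT \<tau>:{t0<..<t}. ?F \<tau>)"
      unfolding Y A by (simp add: algebra_simps)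
    also have "\<dots> \<le> a t + h t * (LBINT \<tau>:{t0<..<t}. K * E \<tau>)"
      using Av Bb h_pos[of t] t t0 by (intro add_mono mult_left_mono) auto
    also have "\<dots> \<le> a t + c / (1 - \<epsilon>)" using Bv by simp
    finally show ?thesis by simp
  qed
  have ev: "eventually (\<lambda>t. ereal (h t * (LBINT \<tau>:{T<..<t}. exp (- integral {\<tau>..t} g) * f \<tau>))
       \<le> ereal (c/(1-\<epsilon>) + a t)) at_top"
    using eventually_gt_at_top[of t0] by eventually_elim (use bound in auto)
  have Glim: "filterlim G at_top at_top"
    using g_div[of "T+1"] unfolding G_def by auto
  have "filterlim (\<lambda>t. (1-\<epsilon>) * (- G t0 + G t)) at_top at_top"
    by (rule filterlim_tendsto_pos_mult_at_top[OF tendsto_const _ filterlim_tendsto_add_at_top[OF tendsto_const Glim]])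
      (use eps in simp)
  then have "filterlim (\<lambda>t. - ((1-\<epsilon>) * (G t - G t0))) at_bot at_top"
    by (simp add: filterlim_uminus_at_bot algebra_simps)
  then have "((\<lambda>t. exp (- ((1-\<epsilon>) * (G t - G t0)))) \<longlongrightarrow> 0) at_top"
    by (rule filterlim_compose[OF exp_at_bot])
  then have alim: "(a \<longlongrightarrow> 0) at_top" unfolding a_def
    by (rule tendsto_mult_right_zero)
  have "Limsup at_top (\<lambda>t. ereal (c/(1-\<epsilon>) + a t)) = ereal (c/(1-\<epsilon>))"
    by (rule lim_imp_Limsup) (auto simp: lim_ereal intro!: tendsto_eq_intros alim)
  then show ?thesis using Limsup_mono[OF ev] by simp
qed

theorem lemmaA3:
  fixes T :: real and f g h :: "real \<Rightarrow> real"
  assumes f_cont: "continuous_on {T<..} f" and f_nonneg: "\<And>t. t > T \<Longrightarrow> f t \<ge> 0"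
    and g_cont: "continuous_on {T<..} g" and g_pos: "\<And>t. t > T \<Longrightarrow> g t > 0"
    and h_cont: "continuous_on {T<..} h" and h_pos: "\<And>t. t > T \<Longrightarrow> h t > 0"
    and h_diff: "\<And>t. t > T \<Longrightarrow> h differentiable (at t)"
    and y_integrable: "\<And>t. t > T \<Longrightarrow>
        set_integrable lborel {T<..<t} (\<lambda>\<tau>. exp (- integral {\<tau>..t} g) * f \<tau>)"
    and g_div: "\<And>s. s > T \<Longrightarrow> filterlim (\<lambda>t. integral {s..t} g) at_top at_top"
    and lim: "((\<lambda>t. deriv h t / (h t * g t)) \<longlongrightarrow> 0) at_top"
  shows "Limsup at_top (\<lambda>t. ereal (h t * (LBINT \<tau>:{T<..<t}. exp (- integral {\<tau>..t} g) * f \<tau>)))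
         \<le> Limsup at_top (\<lambda>t. ereal (h t * f t / g t))"
proof -
  define L where "L = Limsup at_top (\<lambda>t. ereal (h t * f t / g t))"
  have L0: "0 \<le> L" unfolding L_def
  proof (rule le_Limsup)
    show "(at_top :: real filter) \<noteq> bot" by simp
    show "\<forall>\<^sub>F x in at_top. 0 \<le> ereal (h x * f x / g x)"
      using eventually_gt_at_top[of T]
    proof eventually_elim
      case (elim x)
      then have "0 \<le> h x * f x" using f_nonneg h_pos by (simp add: less_imp_le)
      then show ?case using g_pos[OF elim] by simp
    qed
  qed
  have "Limsup at_top (\<lambda>t. ereal (h t * (LBINT \<tau>:{T<..<t}. exp (- integral {\<tau>..t} g) * f \<tau>))) \<le> L"
  proof (cases L)
    case PInf then show ?thesis by simp
  next
    case MInf then show ?thesis using L0 by simp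
  next
    case (real l)
    then have l0: "0 \<le> l" using L0 by simp
    show ?thesis
    proof (rule ereal_le_epsilon2)
      fix \<delta> :: real assume \<delta>: "0 < \<delta>"
      define \<epsilon> where "\<epsilon> = \<delta> / (2 * (1 + l + \<delta>))"
      have e2: "\<epsilon> * (1 + l + \<delta>) = \<delta> / 2" unfolding \<epsilon>_def using l0 \<delta> by (simp add: field_simps)
      have \<epsilon>: "0 < \<epsilon>" "\<epsilon> < 1" unfolding \<epsilon>_def using l0 \<delta> by (auto simp: field_simps)
      have ev1: "eventually (\<lambda>t. ereal (h t * f t / g t) < ereal (l + \<epsilon>)) at_top"
        by (rule Limsup_lessD) (use real \<epsilon> in \<open>simp add: L_def[symmetric]\<close>)
      have ev2: "eventually (\<lambda>t. deriv h t / (h t * g t) < \<epsilon>) at_top"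
        using order_tendstoD(2)[OF lim \<epsilon>(1)] .
      obtain N where N: "\<And>t. t \<ge> N \<Longrightarrow> ereal (h t * f t / g t) < ereal (l + \<epsilon>) \<and> deriv h t / (h t * g t) < \<epsilon>"
        using eventually_conj[OF ev1 ev2] unfolding eventually_at_top_linorder by blast
      define t0 where "t0 = max N (T + 2)"
      have "Limsup at_top (\<lambda>t. ereal (h t * (LBINT \<tau>:{T<..<t}. exp (- integral {\<tau>..t} g) * f \<tau>)))
           \<le> ereal ((l + \<epsilon>) / (1 - \<epsilon>))"
      proof (rule key[OF f_nonneg g_cont g_pos h_pos h_diff y_integrable g_div \<epsilon>(1) \<epsilon>(2)])
        show "0 \<le> l + \<epsilon>" using l0 \<epsilon> by simp
        show "T + 1 < t0" unfolding t0_def by simp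
        fix t assume t: "t0 \<le> t"
        then have "t \<ge> N" unfolding t0_def by simp
        from N[OF this] show "h t * f t / g t \<le> l + \<epsilon>" "deriv h t / (h t * g t) \<le> \<epsilon>" by auto
      qed auto
      also have "(l + \<epsilon>) / (1 - \<epsilon>) \<le> l + \<delta>"
      proof -
        have "(l + \<delta>) * (1 - \<epsilon>) = l + \<delta> - \<epsilon> * (1 + l + \<delta>) + \<epsilon>" by (simp add: algebra_simps)
        also have "\<dots> = l + \<delta> / 2 + \<epsilon>" using e2 by simp
        finally have "l + \<epsilon> \<le> (l + \<delta>) * (1 - \<epsilon>)" using \<delta> by simp
        then show ?thesis using \<epsilon> by (simp add: pos_divide_le_eq)
      qed
      finally show "Limsup at_top (\<lambda>t. ereal (h t * (LBINT \<tau>:{T<..<t}. exp (- integral {\<tau>..t} g) * f \<tau>)))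
           \<le> L + ereal \<delta>" using real by simp
    qed
  qed
  then show ?thesis unfolding L_def .
qed

end
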